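(* For every iteration index $j\ge1$ generated during the $l$-th cycle of RPF-SFISTA, $\|\xi_j-z_{l-1}\|^2\le C_{\bar\mu}(z_{l-1})$.
   Context: Setup. Let $f:\mathbb R^n\to\mathbb R$ be convex and differentiable with $\|\nabla f(z')-\nabla f(z)\|\le\bar L\|z'-z\|$ for all $z,z'\in\mathbb R^n$ (some $\bar L\ge0$). Let $h:\mathbb R^n\to(-\infty,\infty]$ be proper, lower semicontinuous and convex with domain $\mathcal H$. Let $\phi:=f+h$ be $\bar\mu$-strongly convex for some $\bar\mu>0$, with (unique) minimizer $z^*$. Write $\ell_f(u;x):=f(x)+\langle\nabla f(x),u-x\rangle$. Define $C_{\bar\mu}(z):=\frac{8}{\bar\mu}[\phi(z)-\phi(z^* )]$. RPF-SFISTA. Parameters $\chi\in(0,1)$, $\beta>1$; inputs $\mu_0>0$, $\bar M_0>0$, $z_0\in\mathcal H$, $\hat\epsilon>0$. The method runs in cycles $l=1,2,\dots$. At the start of cycle $l$: choose $\underline M_l\in[\max\{\bar M_{l-1}/4,\bar M_0\},\bar M_{l-1}]$ (so $\underline M_1=\bar M_0$), set $\mu:=\mu_{l-1}$, $x_0:=z_{l-1}$, $\xi_0:=y_0:=x_0$, $A_0:=0$, $\tau_0:=1$, $L_0:=\underline M_l$. Then for $j=1,2,\dots$: (i) set $L_j:=L_{j-1}$; (ii) compute $a_{j-1}=\frac{\tau_{j-1}+\sqrt{\tau_{j-1}^2+4\tau_{j-1}A_{j-1}L_j}}{2L_j}$, $\tilde x_{j-1}=\frac{A_{j-1}y_{j-1}+a_{j-1}x_{j-1}}{A_{j-1}+a_{j-1}}$,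 $y_j=\arg\min_{u}\{\ell_f(u;\tilde x_{j-1})+h(u)+\frac{L_j}{2}\|u-\tilde x_{j-1}\|^2\}$; if $f(y_j)\le\ell_f(y_j;\tilde x_{j-1})+\frac{(1-\chi)L_j}{4}\|y_j-\tilde x_{j-1}\|^2$ go to (iii), otherwise replace $L_j$ by $\beta L_j$ and repeat (ii); (iii) set $\xi_j:=y_j$ if $\phi(y_j)\le\phi(\xi_{j-1})$ and $\xi_j:=\xi_{j-1}$ otherwise; $A_j:=A_{j-1}+a_{j-1}$; $\tau_j:=\tau_{j-1}+a_{j-1}\mu/2$; $s_j:=L_j(\tilde x_{j-1}-y_j)$; $x_j:=\tau_j^{-1}[\mu a_{j-1}y_j/2+\tau_{j-1}x_{j-1}-a_{j-1}s_j]$; $v_j:=\nabla f(y_j)-\nabla f(\tilde x_{j-1})+s_j$; (iv) if $\|\xi_j-x_0\|^2<\chi A_jL_j\|y_j-\tilde x_{j-1}\|^2$, the cycle ends with a restart: set $z_l:=\xi_j$, $\bar M_l:=L_j$, $\mu_l:=\mu/2$ and start cycle $l+1$; (v) otherwise, if $\|v_j\|\le\hat\epsilon$, stop and output $(y,v,\xi,L):=(y_j,v_j,\xi_j,L_j)$; else go to iteration $j+1$. *)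

theory Defs
  imports "HOL-Analysis.Analysis"
begin

(* An extended-real-valued h : R^n -> (-inf,inf] is represented by its domain
   H (the set where h < inf) together with its finite values h on H. *)

(* lower semicontinuity of the extended function (= +inf off H): closed epigraph *)
definition lsc_ext :: "'a::euclidean_space set \<Rightarrow> ('a \<Rightarrow> real) \<Rightarrow> bool" where
  "lsc_ext H h \<longleftrightarrow> closed {(x, t). x \<in> H \<and> h x \<le> t}"

definition proper_lsc_convex :: "'a::euclidean_space set \<Rightarrow> ('a \<Rightarrow> real) \<Rightarrow> bool" where
  "proper_lsc_convex H h \<longleftrightarrow> H \<noteq> {} \<and> convex H \<and> convex_on H h \<and> lsc_ext H h"

definition strongly_convex_on :: "'a::euclidean_space set \<Rightarrow> real \<Rightarrow> ('a \<Rightarrow> real) \<Rightarrow> bool" where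
  "strongly_convex_on H mu p \<longleftrightarrow> convex H \<and>
     (\<forall>x\<in>H. \<forall>y\<in>H. \<forall>t::real. 0 \<le> t \<and> t \<le> 1 \<longrightarrow>
        p (t *\<^sub>R x + (1 - t) *\<^sub>R y) \<le> t * p x + (1 - t) * p y - mu / 2 * t * (1 - t) * (norm (x - y))\<^sup>2)"

(* linearization  l_f(u; x) = f x + <grad f x, u - x> ; g is the gradient of f *)
definition lin_f :: "('a::euclidean_space \<Rightarrow> real) \<Rightarrow> ('a \<Rightarrow> 'a) \<Rightarrow> 'a \<Rightarrow> 'a \<Rightarrow> real" where
  "lin_f f g x u = f x + inner (g x) (u - x)"

definition C_mu :: "real \<Rightarrow> ('a \<Rightarrow> real) \<Rightarrow> 'a \<Rightarrow> 'a \<Rightarrow> real" where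
  "C_mu mub phi zs z = 8 / mub * (phi z - phi zs)"

definition prox_pt :: "('a::euclidean_space \<Rightarrow> real) \<Rightarrow> ('a \<Rightarrow> 'a) \<Rightarrow> ('a \<Rightarrow> real) \<Rightarrow> 'a set
                       \<Rightarrow> real \<Rightarrow> 'a \<Rightarrow> 'a" where
  "prox_pt f g h H L xt = (SOME u. u \<in> H \<and> (\<forall>w\<in>H.
      lin_f f g xt u + h u + L / 2 * (norm (u - xt))\<^sup>2 \<le> lin_f f g xt w + h w + L / 2 * (norm (w - xt))\<^sup>2))"

record 'a rstate =
  rs_cyc :: nat
  rs_it  :: nat
  rs_x0  :: 'a       (* x_0 = z_{l-1} *)
  rs_mu  :: real     (* mu = mu_{l-1} *)
  rs_A   :: real
  rs_tau :: real
  rs_L   :: real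
  rs_x   :: 'a
  rs_y   :: 'a
  rs_xi  :: 'a
  rs_xt  :: 'a       (* tilde x_{j-1} *)
  rs_v   :: 'a

definition cycle_start :: "nat \<Rightarrow> 'a::euclidean_space \<Rightarrow> real \<Rightarrow> real \<Rightarrow> 'a rstate" where
  "cycle_start l z mu M = \<lparr> rs_cyc = l, rs_it = 0, rs_x0 = z, rs_mu = mu, rs_A = 0, rs_tau = 1,
      rs_L = M, rs_x = z, rs_y = z, rs_xi = z, rs_xt = z, rs_v = 0 \<rparr>"

definition trial_L :: "real \<Rightarrow> 'a rstate \<Rightarrow> nat \<Rightarrow> real" where
  "trial_L beta s k = beta ^ k * rs_L s"

definition trial_a :: "real \<Rightarrow> 'a rstate \<Rightarrow> nat \<Rightarrow> real" where
  "trial_a beta s k = (let L = trial_L beta s k; tau = rs_tau s; A = rs_A s in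
      (tau + sqrt (tau\<^sup>2 + 4 * tau * A * L)) / (2 * L))"

definition trial_xt :: "real \<Rightarrow> 'a::euclidean_space rstate \<Rightarrow> nat \<Rightarrow> 'a" where
  "trial_xt beta s k = (let a = trial_a beta s k; A = rs_A s in
      (1 / (A + a)) *\<^sub>R (A *\<^sub>R rs_y s + a *\<^sub>R rs_x s))"

definition trial_y :: "('a::euclidean_space \<Rightarrow> real) \<Rightarrow> ('a \<Rightarrow> 'a) \<Rightarrow> ('a \<Rightarrow> real) \<Rightarrow> 'a set
                        \<Rightarrow> real \<Rightarrow> 'a rstate \<Rightarrow> nat \<Rightarrow> 'a" where
  "trial_y f g h H beta s k = prox_pt f g h H (trial_L beta s k) (trial_xt beta s k)"

definition bt_ok :: "('a::euclidean_space \<Rightarrow> real) \<Rightarrow> ('a \<Rightarrow> 'a) \<Rightarrow> ('a \<Rightarrow> real) \<Rightarrow> 'a set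
                      \<Rightarrow> real \<Rightarrow> real \<Rightarrow> 'a rstate \<Rightarrow> nat \<Rightarrow> bool" where
  "bt_ok f g h H chi beta s k = (let L = trial_L beta s k; xt = trial_xt beta s k;
      y = trial_y f g h H beta s k in
      f y \<le> lin_f f g xt y + (1 - chi) * L / 4 * (norm (y - xt))\<^sup>2)"

definition next_state :: "('a::euclidean_space \<Rightarrow> real) \<Rightarrow> ('a \<Rightarrow> 'a) \<Rightarrow> ('a \<Rightarrow> real) \<Rightarrow> 'a set
                      \<Rightarrow> real \<Rightarrow> 'a rstate \<Rightarrow> nat \<Rightarrow> 'a rstate" where
  "next_state f g h H beta s k = (let L = trial_L beta s k; a = trial_a beta s k;
      xt = trial_xt beta s k; y = trial_y f g h H beta s k; mu = rs_mu s;
      tau' = rs_tau s + a * mu / 2; sj = L *\<^sub>R (xt - y) in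
      s\<lparr> rs_it := Suc (rs_it s),
         rs_A := rs_A s + a,
         rs_tau := tau',
         rs_L := L,
         rs_x := (1 / tau') *\<^sub>R ((mu * a / 2) *\<^sub>R y + rs_tau s *\<^sub>R rs_x s - a *\<^sub>R sj),
         rs_y := y,
         rs_xi := (if f y + h y \<le> f (rs_xi s) + h (rs_xi s) then y else rs_xi s),
         rs_xt := xt,
         rs_v := g y - g xt + sj \<rparr>)"

definition restart_test :: "real \<Rightarrow> 'a::euclidean_space rstate \<Rightarrow> bool" where
  "restart_test chi s \<longleftrightarrow> 1 \<le> rs_it s \<and>
     (norm (rs_xi s - rs_x0 s))\<^sup>2 < chi * rs_A s * rs_L s * (norm (rs_y s - rs_xt s))\<^sup>2"

definition continue_test :: "real \<Rightarrow> real \<Rightarrow> 'a::euclidean_space rstate \<Rightarrow> bool" where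
  "continue_test chi eps s \<longleftrightarrow> rs_it s = 0 \<or> (\<not> restart_test chi s \<and> norm (rs_v s) > eps)"

inductive rpf_reach :: "('a::euclidean_space \<Rightarrow> real) \<Rightarrow> ('a \<Rightarrow> 'a) \<Rightarrow> ('a \<Rightarrow> real) \<Rightarrow> 'a set
      \<Rightarrow> real \<Rightarrow> real \<Rightarrow> real \<Rightarrow> real \<Rightarrow> 'a \<Rightarrow> real \<Rightarrow> 'a rstate \<Rightarrow> bool"
  for f g h H chi beta mu0 M0 z0 eps where
  init: "rpf_reach f g h H chi beta mu0 M0 z0 eps (cycle_start 1 z0 mu0 M0)"
| step: "rpf_reach f g h H chi beta mu0 M0 z0 eps s \<Longrightarrow> continue_test chi eps s \<Longrightarrow>
         (\<exists>k. bt_ok f g h H chi beta s k) \<Longrightarrow>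
         rpf_reach f g h H chi beta mu0 M0 z0 eps
           (next_state f g h H beta s (LEAST k. bt_ok f g h H chi beta s k))"
| restart: "rpf_reach f g h H chi beta mu0 M0 z0 eps s \<Longrightarrow> restart_test chi s \<Longrightarrow>
         max (rs_L s / 4) M0 \<le> M \<Longrightarrow> M \<le> rs_L s \<Longrightarrow>
         rpf_reach f g h H chi beta mu0 M0 z0 eps
           (cycle_start (Suc (rs_cyc s)) (rs_xi s) (rs_mu s / 2) M)"

end

theory Submission
  imports Defs
begin

lemma h_below_ball:
  fixes h :: "'a::euclidean_space \<Rightarrow> real"
  assumes cl: "closed {(x, t). x \<in> H \<and> h x \<le> t}"
  shows "\<exists>m. \<forall>u\<in>H. u \<in> cball a r \<longrightarrow> m \<le> h u"
proof (rule ccontr)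
  assume "\<not> ?thesis"
  hence nb: "\<And>m. \<exists>u\<in>H. u \<in> cball a r \<and> h u < m" by (auto simp: not_le)
  define E where "E = {(x, t). x \<in> H \<and> h x \<le> t}"
  define C where "C n = (\<lambda>u. (u, - real n)) -` E" for n :: nat
  have clC: "closed (C n)" for n
    unfolding C_def using cl E_def by (intro closed_vimage) (auto intro!: continuous_intros)
  have "cball a r \<inter> \<Inter>(range C) \<noteq> {}"
  proof (rule compact_imp_fip)
    show "compact (cball a r)" by simp
    show "\<And>T. T \<in> range C \<Longrightarrow> closed T" using clC by auto
    fix F' assume fin: "finite F'" and sub: "F' \<subseteq> range C"
    then obtain N where N: "finite N" "F' = C ` N" by (meson finite_subset_image)
    define n where "n = Max (insert 0 N)"
    obtain u where u: "u \<in> H" "u \<in> cball a r" "h u < - real n" using nb by blast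
    have "u \<in> C k" if "k \<in> N" for k
    proof -
      have "k \<le> n" unfolding n_def using N(1) that by simp
      thus ?thesis using u unfolding C_def E_def by auto
    qed
    thus "cball a r \<inter> \<Inter>F' \<noteq> {}" using u N by auto
  qed
  then obtain x where x: "\<And>n. x \<in> C n" by auto
  obtain n :: nat where "- h x < real n" using reals_Archimedean2 by blast
  moreover have "x \<in> H" "h x \<le> - real n" using x[of n] unfolding C_def E_def by auto
  ultimately show False by linarith
qed

lemma h_affine_below:
  fixes h :: "'a::euclidean_space \<Rightarrow> real"
  assumes cl: "closed {(x, t). x \<in> H \<and> h x \<le> t}" and cvx: "convex H" "convex_on H h"
    and p: "p \<in> H"
  shows "\<exists>m c. c \<ge> 0 \<and> (\<forall>u\<in>H. m - c * norm (u - p) \<le> h u)"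
proof -
  obtain m0 where m0: "\<And>u. u \<in> H \<Longrightarrow> u \<in> cball p 1 \<Longrightarrow> m0 \<le> h u"
    using h_below_ball[OF cl, of p 1] by blast
  have m0p: "m0 \<le> h p" using m0[OF p] by simp
  define c where "c = h p - m0"
  have "m0 - c * norm (u - p) \<le> h u" if u: "u \<in> H" for u
  proof (cases "norm (u - p) \<le> 1")
    case True
    hence "u \<in> cball p 1" by (simp add: dist_norm norm_minus_commute)
    hence "m0 \<le> h u" using m0 u by blast
    moreover have "c * norm (u - p) \<ge> 0" using m0p c_def by simp
    ultimately show ?thesis by linarith
  next
    case False
    define d where "d = norm (u - p)"
    define t where "t = 1 / d"
    have d1: "d > 1" using False d_def by simp
    have t01: "0 < t" "t < 1" using d1 t_def by auto
    define w where "w = t *\<^sub>R u + (1 - t) *\<^sub>R p"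
    have wH: "w \<in> H" using cvx(1) u p t01 unfolding w_def convex_def by simp
    have "w - p = t *\<^sub>R (u - p)" unfolding w_def by (simp add: algebra_simps)
    hence "norm (w - p) = 1" using t01 d1 unfolding t_def d_def by simp
    hence "w \<in> cball p 1" by (simp add: dist_norm norm_minus_commute)
    hence hw: "m0 \<le> h w" using m0 wH by blast
    have "h w \<le> t * h u + (1 - t) * h p"
      using convex_onD[OF cvx(2), of "1 - t" u p] t01 u p unfolding w_def by simp
    hence "m0 \<le> t * h u + (1 - t) * h p" using hw by linarith
    hence "m0 - h p \<le> t * (h u - h p)" by (simp add: algebra_simps)
    hence "d * (m0 - h p) \<le> d * (t * (h u - h p))" using d1 by (simp add: mult_left_mono)
    also have "\<dots> = h u - h p" using d1 t_def by simp
    finally have "h p - c * d \<le> h u" unfolding c_def by (simp add: algebra_simps)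
    thus ?thesis using m0p unfolding d_def by linarith
  qed
  moreover have "c \<ge> 0" using m0p c_def by simp
  ultimately show ?thesis by blast
qed

lemma argmin_exists:
  fixes h :: "'a::euclidean_space \<Rightarrow> real"
  assumes cl: "closed {(x, t). x \<in> H \<and> h x \<le> t}" and cvx: "convex H" "convex_on H h"
    and ne: "H \<noteq> {}" and L: "L > 0"
  shows "\<exists>u\<in>H. \<forall>w\<in>H. c0 + inner G (u - xt) + h u + L / 2 * (norm (u - xt))\<^sup>2
            \<le> c0 + inner G (w - xt) + h w + L / 2 * (norm (w - xt))\<^sup>2"
proof -
  define psi where "psi w = c0 + inner G (w - xt) + h w + L / 2 * (norm (w - xt))\<^sup>2" for w
  obtain p where p: "p \<in> H" using ne by blast
  obtain m c where mc: "c \<ge> 0" "\<And>u. u \<in> H \<Longrightarrow> m - c * norm (u - p) \<le> h u"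
    using h_affine_below[OF cl cvx p] by blast
  define e where "e = norm (p - xt)"
  define B where "B = c + norm G"
  define D where "D = psi p - c0 - m + c * e"
  define R where "R = 1 + 2 * (\<bar>D\<bar> + B) / L"
  define T where "T = psi p - c0 + norm G * R"
  have B0: "B \<ge> 0" using mc B_def by simp
  have bnd: "norm (w - xt) \<le> R \<and> h w \<le> T" if w: "w \<in> H" "psi w \<le> psi p" for w
  proof -
    define d where "d = norm (w - xt)"
    have d0: "d \<ge> 0" using d_def by simp
    have "norm (w - p) \<le> d + e" unfolding d_def e_def
      using norm_triangle_ineq[of "w - xt" "xt - p"] by (simp add: norm_minus_commute)
    hence "c * norm (w - p) \<le> c * (d + e)" using mc(1) by (simp add: mult_left_mono)
    hence h1: "m - c * (d + e) \<le> h w" using mc(2)[OF w(1)] by linarith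
    have "\<bar>inner G (w - xt)\<bar> \<le> norm G * d" unfolding d_def by (rule Cauchy_Schwarz_ineq2)
    hence i1: "- (norm G * d) \<le> inner G (w - xt)" by linarith
    have "c0 + m - c * e - B * d + L / 2 * d\<^sup>2 \<le> psi w"
      using h1 i1 unfolding psi_def d_def[symmetric] B_def by (simp add: algebra_simps)
    hence q: "L / 2 * d\<^sup>2 \<le> D + B * d" using w(2) unfolding D_def by linarith
    have dR: "d \<le> R"
    proof (cases "d \<le> 1")
      case True thus ?thesis unfolding R_def using L B0 by (simp add: add_increasing2)
    next
      case False
      have "D \<le> \<bar>D\<bar> * d" using False by (smt (verit) mult_le_cancel_left1)
      hence "L / 2 * d * d \<le> (\<bar>D\<bar> + B) * d" using q by (simp add: power2_eq_square algebra_simps)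
      hence "L / 2 * d \<le> \<bar>D\<bar> + B" using False by simp
      hence "d \<le> 2 * (\<bar>D\<bar> + B) / L" using L by (simp add: field_simps)
      thus ?thesis unfolding R_def by simp
    qed
    have "\<bar>inner G (w - xt)\<bar> \<le> norm G * R"
      using \<open>\<bar>inner G (w - xt)\<bar> \<le> norm G * d\<close> dR
      by (meson mult_left_mono norm_ge_zero order_trans)
    moreover have "L / 2 * d\<^sup>2 \<ge> 0" using L by simp
    ultimately have "h w \<le> T" using w(2) unfolding psi_def T_def d_def by linarith
    thus ?thesis using dR d_def by simp
  qed
  obtain m1 where m1: "\<And>u. u \<in> H \<Longrightarrow> u \<in> cball xt R \<Longrightarrow> m1 \<le> h u"
    using h_below_ball[OF cl, of xt R] by blast
  define E where "E = {(x, t). x \<in> H \<and> h x \<le> t}"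
  define S where "S = E \<inter> (cball xt R \<times> {..T})"
  have "compact S"
  proof (rule compact_eq_bounded_closed[THEN iffD2, OF conjI, rotated])
    show "closed S" unfolding S_def E_def using cl by (intro closed_Int closed_Times) auto
    have "S \<subseteq> cball xt R \<times> {m1..T}"
      unfolding S_def E_def using m1 by (force simp: dist_norm norm_minus_commute)
    moreover have "bounded (cball xt R \<times> {m1..T})" by (intro bounded_Times) auto
    ultimately show "bounded S" by (rule bounded_subset[rotated])
  qed
  define F where "F z = c0 + inner G (fst z - xt) + snd z + L / 2 * (norm (fst z - xt))\<^sup>2"
    for z :: "'a \<times> real"
  have Fpsi: "F (w, h w) = psi w" for w unfolding F_def psi_def by simp
  have inS: "(w, h w) \<in> S" if "w \<in> H" "psi w \<le> psi p" for w
    using bnd[OF that] that(1) unfolding S_def E_def by (simp add: dist_norm norm_minus_commute)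
  have "S \<noteq> {}" using inS[OF p] by auto
  moreover have "continuous_on S F" unfolding F_def by (intro continuous_intros)
  ultimately obtain z where z: "z \<in> S" "\<And>y. y \<in> S \<Longrightarrow> F z \<le> F y"
    using continuous_attains_inf[OF \<open>compact S\<close>] by blast
  obtain u0 t0 where zu: "z = (u0, t0)" by (cases z)
  have u0: "u0 \<in> H" "h u0 \<le> t0" using z(1) zu unfolding S_def E_def by auto
  have "psi u0 \<le> F z" using u0 zu unfolding F_def psi_def by simp
  have "psi u0 \<le> psi w" if w: "w \<in> H" for w
  proof (cases "psi w \<le> psi p")
    case True
    thus ?thesis using z(2)[OF inS[OF w True]] Fpsi \<open>psi u0 \<le> F z\<close> by simp
  next
    case False
    thus ?thesis using z(2)[OF inS[OF p]] Fpsi[of p] \<open>psi u0 \<le> F z\<close> by simp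
  qed
  thus ?thesis using u0(1) unfolding psi_def by blast
qed

lemma prox_in_H:
  fixes h :: "'a::euclidean_space \<Rightarrow> real"
  assumes hprop: "proper_lsc_convex H h" and L: "L > 0"
  shows "prox_pt f g h H L xt \<in> H"
proof -
  have cl: "closed {(x, t). x \<in> H \<and> h x \<le> t}" and cv: "convex H" "convex_on H h" and ne: "H \<noteq> {}"
    using hprop unfolding proper_lsc_convex_def lsc_ext_def by auto
  obtain u where "u \<in> H" "\<forall>w\<in>H. f xt + inner (g xt) (u - xt) + h u + L / 2 * (norm (u - xt))\<^sup>2
            \<le> f xt + inner (g xt) (w - xt) + h w + L / 2 * (norm (w - xt))\<^sup>2"
    using argmin_exists[OF cl cv ne L, of "f xt" "g xt" xt] by blast
  hence ex: "\<exists>u. u \<in> H \<and> (\<forall>w\<in>H.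
      lin_f f g xt u + h u + L / 2 * (norm (u - xt))\<^sup>2 \<le> lin_f f g xt w + h w + L / 2 * (norm (w - xt))\<^sup>2)"
    unfolding lin_f_def by blast
  show ?thesis unfolding prox_pt_def using someI_ex[OF ex] by blast
qed

lemma reach_inv:
  fixes h :: "'a::euclidean_space \<Rightarrow> real"
  assumes reach: "rpf_reach f g h H chi beta mu0 M0 z0 eps s"
    and hprop: "proper_lsc_convex H h" and par: "beta > 1" "M0 > 0" "z0 \<in> H"
  shows "rs_x0 s \<in> H \<and> rs_xi s \<in> H \<and> f (rs_xi s) + h (rs_xi s) \<le> f (rs_x0 s) + h (rs_x0 s) \<and> rs_L s > 0"
  using reach
proof (induction rule: rpf_reach.induct)
  case init
  thus ?case using par by (simp add: cycle_start_def)
next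
  case (step s)
  define k where "k = (LEAST k. bt_ok f g h H chi beta s k)"
  have Lp: "trial_L beta s k > 0" using step.IH par unfolding trial_L_def by simp
  have yH: "trial_y f g h H beta s k \<in> H" unfolding trial_y_def by (rule prox_in_H[OF hprop Lp])
  show ?case using step.IH yH Lp unfolding k_def[symmetric]
    by (simp add: next_state_def Let_def)
next
  case (restart s M)
  thus ?case using par by (simp add: cycle_start_def)
qed

lemma sc_growth:
  fixes p :: "'a::euclidean_space \<Rightarrow> real"
  assumes sc: "strongly_convex_on H mu p" and mu: "mu > 0"
    and zs: "zs \<in> H" "\<And>z. z \<in> H \<Longrightarrow> p zs \<le> p z" and z: "z \<in> H"
  shows "mu / 2 * (norm (z - zs))\<^sup>2 \<le> p z - p zs"
proof (rule ccontr)
  assume "\<not> ?thesis"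
  hence lt: "p z - p zs < mu / 2 * (norm (z - zs))\<^sup>2" by simp
  define av where "av = mu / 2 * (norm (z - zs))\<^sup>2"
  have gap: "p z - p zs \<ge> 0" using zs(2)[OF z] by simp
  have a0: "av > 0" using lt gap av_def by linarith
  define t where "t = (av - (p z - p zs)) / (2 * av)"
  have t01: "0 < t" "t \<le> 1" using a0 lt gap unfolding t_def av_def[symmetric] by (auto simp: field_simps)
  have cvx: "convex H" using sc unfolding strongly_convex_on_def by simp
  have mem: "t *\<^sub>R z + (1 - t) *\<^sub>R zs \<in> H" using cvx z zs(1) t01 unfolding convex_def by simp
  have "p (t *\<^sub>R z + (1 - t) *\<^sub>R zs) \<le> t * p z + (1 - t) * p zs - mu / 2 * t * (1 - t) * (norm (z - zs))\<^sup>2"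
    using sc z zs(1) t01 unfolding strongly_convex_on_def by simp
  hence "p zs \<le> t * p z + (1 - t) * p zs - t * (1 - t) * av"
    using zs(2)[OF mem] unfolding av_def by (simp add: algebra_simps)
  hence "t * (1 - t) * av \<le> t * (p z - p zs)" by (simp add: algebra_simps)
  hence "(1 - t) * av \<le> p z - p zs" using t01 by (simp add: mult.assoc)
  moreover have "(1 - t) * av = (av + (p z - p zs)) / 2" using a0 unfolding t_def by (simp add: field_simps)
  moreover have "p z - p zs < av" using lt unfolding av_def .
  ultimately have "(av + (p z - p zs)) / 2 \<le> p z - p zs" "p z - p zs < av" by simp_all
  thus False by (simp add: field_simps)
qed

theorem lemmaA1:
  fixes f h :: "'a::euclidean_space \<Rightarrow> real" and g :: "'a \<Rightarrow> 'a" and H :: "'a set"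
    and Lbar mubar chi beta mu0 M0 eps :: real and z0 zs :: 'a and s :: "'a rstate"
  assumes grad: "\<And>x. (f has_derivative (\<lambda>d. inner (g x) d)) (at x)"
    and fconv: "convex_on UNIV f"
    and Lip: "Lbar \<ge> 0" "\<And>z z'. norm (g z' - g z) \<le> Lbar * norm (z' - z)"
    and hprop: "proper_lsc_convex H h"
    and mub: "mubar > 0" and sconv: "strongly_convex_on H mubar (\<lambda>z. f z + h z)"
    and zs: "zs \<in> H" "\<And>z. z \<in> H \<Longrightarrow> f zs + h zs \<le> f z + h z"
    and par: "0 < chi" "chi < 1" "beta > 1" "mu0 > 0" "M0 > 0" "z0 \<in> H" "eps > 0"
    and reach: "rpf_reach f g h H chi beta mu0 M0 z0 eps s"
    and j: "rs_it s \<ge> 1"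
  shows "(norm (rs_xi s - rs_x0 s))\<^sup>2 \<le> C_mu mubar (\<lambda>z. f z + h z) zs (rs_x0 s)"
proof -
  define phi where "phi = (\<lambda>z. f z + h z)"
  define xi where "xi = rs_xi s"
  define x0 where "x0 = rs_x0 s"
  have inv: "x0 \<in> H" "xi \<in> H" "phi xi \<le> phi x0"
    using reach_inv[OF reach hprop par(3,5,6)] unfolding phi_def xi_def x0_def by auto
  have g1: "mubar / 2 * (norm (xi - zs))\<^sup>2 \<le> phi xi - phi zs"
    using sc_growth[of H mubar phi zs xi] sconv mub zs inv unfolding phi_def by auto
  have g2: "mubar / 2 * (norm (x0 - zs))\<^sup>2 \<le> phi x0 - phi zs"
    using sc_growth[of H mubar phi zs x0] sconv mub zs inv unfolding phi_def by auto
  have "norm (xi - x0) \<le> norm (xi - zs) + norm (x0 - zs)"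
    using norm_triangle_ineq4[of "xi - zs" "x0 - zs"] by simp
  hence "(norm (xi - x0))\<^sup>2 \<le> (norm (xi - zs) + norm (x0 - zs))\<^sup>2"
    by (simp add: power_mono)
  also have "\<dots> \<le> 2 * (norm (xi - zs))\<^sup>2 + 2 * (norm (x0 - zs))\<^sup>2"
    by (smt (verit) sum_squares_bound power2_sum)
  also have "\<dots> \<le> 8 / mubar * (phi x0 - phi zs)"
  proof -
    have "mubar * (2 * (norm (xi - zs))\<^sup>2 + 2 * (norm (x0 - zs))\<^sup>2) \<le> 8 * (phi x0 - phi zs)"
      using g1 g2 inv(3) by (simp add: algebra_simps)
    thus ?thesis using mub by (simp add: field_simps)
  qed
  finally show ?thesis unfolding C_mu_def phi_def xi_def x0_def .
qed

end
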